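(* Let $V,W$ be $d$-dimensional real vector spaces, $1\le k\le d-1$, and $A,B\in\operatorname{Hom}(V,W)$ with $\bigwedge^kA=\bigwedge^kB$ and $\operatorname{rank}A>k$. Then $A=\pm B$. If $k$ is odd, then $A=B$.
   Context: $\bigwedge^kA:\bigwedge^kV\to\bigwedge^kW$ is defined by $v_1\wedge\dots\wedge v_k\mapsto Av_1\wedge\dots\wedge Av_k$. *)

theory Defs
  imports "HOL-Analysis.Analysis" "HOL-Combinatorics.Permutations"
begin

text \<open>The decomposable k-vector v_0 wedge ... wedge v_(k-1) of vectors in real^'n,
  represented (faithfully) as the corresponding alternating tensor in the k-fold
  tensor power: its coefficient at the basis tensor e_(j 0) x ... x e_(j (k-1))
  is det [ (v i) $ (j l) ]_(i,l<k), i.e. the antisymmetrisation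
  sum over permutations p of sign p * prod_i (v i) $ (j (p i)).\<close>
definition wedge :: "nat \<Rightarrow> (nat \<Rightarrow> real^'n) \<Rightarrow> ((nat \<Rightarrow> 'n) \<Rightarrow> real)" where
  "wedge k v = (\<lambda>j. \<Sum>p\<in>{p. p permutes {..<k}}. of_int (sign p) * (\<Prod>i<k. v i $ j (p i)))"

text \<open>Equality of the induced maps on k-th exterior powers: since the k-th exterior
  power of V is spanned by decomposable k-vectors, the linear maps
  wedge^k A and wedge^k B agree iff they agree on every v_1 wedge ... wedge v_k.\<close>
definition ext_pow_eq :: "nat \<Rightarrow> real^'m^'n \<Rightarrow> real^'m^'n \<Rightarrow> bool" where
  "ext_pow_eq k A B \<longleftrightarrow>
     (\<forall>v :: nat \<Rightarrow> real^'m. wedge k (\<lambda>i. A *v v i) = wedge k (\<lambda>i. B *v v i))"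

end

theory Submission
  imports Defs Jordan_Normal_Form.Determinant
begin

lemma wedge_det:
  "wedge k w j = Determinant.det (Matrix.mat k k (\<lambda>(i,l). w i $ j l))"
proof -
  have "\<And>p. p permutes {..<k} \<Longrightarrow> (\<Prod>i<k. w i $ j (p i)) =
     (\<Prod>i = 0..<k. Matrix.mat k k (\<lambda>(i,l). w i $ j l) $$ (i, p i))"
    by (rule prod.cong, auto simp: atLeast0LessThan permutes_in_image)
  then show ?thesis
    unfolding wedge_def Determinant.det_def
    by (auto simp: atLeast0LessThan intro!: sum.cong)
qed

lemma det_ut:
  fixes f :: "nat \<Rightarrow> nat \<Rightarrow> real"
  assumes k: "1 \<le> k" and D: "\<And>i l. i<k-1 \<Longrightarrow> l<k-1 \<Longrightarrow> f i l = (if i = l then d else 0)"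
   and Z: "\<And>l. l<k-1 \<Longrightarrow> f (k-1) l = 0"
  shows "Determinant.det (Matrix.mat k k (\<lambda>(i,l). f i l)) = d^(k-1) * f (k-1) (k-1)"
proof -
  let ?M = "Matrix.mat k k (\<lambda>(i,l). f i l)"
  have ut: "upper_triangular ?M" unfolding upper_triangular_def
  proof (intro allI impI)
    fix i j assume i: "i < dim_row ?M" and j: "j < i"
    show "?M $$ (i,j) = 0"
    proof (cases "i < k - 1")
      case True thus ?thesis using i j D[of i j] by auto
    next
      case False hence "i = k - 1" using i by auto
      thus ?thesis using i j Z[of j] by auto
    qed
  qed
  have "Determinant.det ?M = prod_list (diag_mat ?M)" by (rule det_upper_triangular[OF ut]) auto
  also have "diag_mat ?M = map (\<lambda>i. f i i) [0..<k]" by (simp add: diag_mat_def)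
  also have "prod_list (map (\<lambda>i. f i i) [0..<k]) = (\<Prod>i\<in>{..<k}. f i i)"
    by (metis atLeast_upt distinct_upt prod.distinct_set_conv_list)
  also have "\<dots> = (\<Prod>i\<in>{..<k-1}. f i i) * f (k-1) (k-1)"
  proof -
    obtain m where m: "k = Suc m" using k by (cases k) auto
    show ?thesis by (simp add: m)
  qed
  also have "(\<Prod>i\<in>{..<k-1}. f i i) = (\<Prod>i\<in>{..<k-1}. d)" by (rule prod.cong) (auto simp: D)
  also have "\<dots> = d^(k-1)" by simp
  finally show ?thesis by (simp only:)
qed

lemma det_lt:
  fixes f :: "nat \<Rightarrow> nat \<Rightarrow> real"
  assumes k: "1 \<le> k" and D: "\<And>i l. i<k-1 \<Longrightarrow> l<k-1 \<Longrightarrow> f i l = (if i = l then d else 0)"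
   and Z: "\<And>i. i<k-1 \<Longrightarrow> f i (k-1) = 0"
  shows "Determinant.det (Matrix.mat k k (\<lambda>(i,l). f i l)) = d^(k-1) * f (k-1) (k-1)"
proof -
  let ?M = "Matrix.mat k k (\<lambda>(i,l). f i l)"
  have "Determinant.det ?M = Determinant.det (transpose_mat ?M)"
    by (rule det_transpose[symmetric]) auto
  also have "transpose_mat ?M = Matrix.mat k k (\<lambda>(i,l). f l i)" by (rule eq_matI) auto
  also have "Determinant.det \<dots> = d^(k-1) * f (k-1) (k-1)"
  proof -
    have D': "f l i = (if i = l then d else 0)" if "i<k-1" "l<k-1" for i l
      using D[OF that(2) that(1)] by auto
    show ?thesis using det_ut[of k "\<lambda>i l. f l i" d, OF k D' Z] by (simp only:)
  qed
  finally show ?thesis .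
qed

lemma c_pm: fixes c :: real assumes "c^k = 1" "1 \<le> k" shows "c = 1 \<or> c = -1"
proof -
  have "\<bar>c\<bar>^k = 1" using assms by (simp add: power_abs[symmetric])
  hence "\<bar>c\<bar> ^ k = 1 ^ k" by simp
  hence "\<bar>c\<bar> = 1" by (rule power_eq_imp_eq_base) (use assms in auto)
  thus ?thesis by (cases "c \<ge> 0") auto
qed

theorem mainTheorem12:
  fixes A B :: "real^'m^'n" and k :: nat
  assumes "CARD('m) = CARD('n)"
    and "1 \<le> k" and "k \<le> CARD('n) - 1"
    and "ext_pow_eq k A B"
    and "rank A > k"
  shows "(A = B \<or> A = - B) \<and> (odd k \<longrightarrow> A = B)"
proof -
  have k1: "1 \<le> k" using assms(2) .
  have key: "Determinant.det (Matrix.mat k k (\<lambda>(i,l). (A *v w i) $ \<rho> l))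
      = Determinant.det (Matrix.mat k k (\<lambda>(i,l). (B *v w i) $ \<rho> l))"
    for w :: "nat \<Rightarrow> real^'m" and \<rho> :: "nat \<Rightarrow> 'n"
  proof -
    have "wedge k (\<lambda>i. A *v w i) = wedge k (\<lambda>i. B *v w i)"
      using assms(4) unfolding ext_pow_eq_def by blast
    hence "wedge k (\<lambda>i. A *v w i) \<rho> = wedge k (\<lambda>i. B *v w i) \<rho>" by simp
    thus ?thesis by (simp add: wedge_det)
  qed
  have rk: "rank A = dim (Finite_Cartesian_Product.rows A)" by (rule row_rank_def)
  obtain Bs where Bs: "Bs \<subseteq> Finite_Cartesian_Product.rows A" "independent Bs" "Finite_Cartesian_Product.rows A \<subseteq> span Bs" "card Bs = dim (Finite_Cartesian_Product.rows A)"
    by (rule basis_exists)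
  have "Suc k \<le> card Bs" using assms(5) rk Bs(4) by simp
  then obtain C where C: "C \<subseteq> Bs" "card C = Suc k" "finite C" by (rule obtain_subset_with_card_n)
  have indC: "independent C" using Bs(2) C(1) independent_mono by blast
  have "card {..k} = card C" using C(2) by simp
  then obtain h where h: "bij_betw h {..k} C" using C(3) finite_same_card_bij by blast
  have "\<exists>r. h l = A $ r" if "l \<le> k" for l
  proof -
    have "h l \<in> Finite_Cartesian_Product.rows A" using h that C(1) Bs(1) bij_betwE by blast
    then obtain r where "h l = Finite_Cartesian_Product.row r A" unfolding Finite_Cartesian_Product.rows_def by blast
    hence "h l = A $ r" by (simp add: Finite_Cartesian_Product.row_def vec_lambda_eta)
    thus ?thesis by blast
  qed
  then obtain R where R: "\<And>l. l \<le> k \<Longrightarrow> h l = A $ R l" by metis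
  have "\<exists>g. linear g \<and> (\<forall>x\<in>C. g x = (if x = h i then 1 else (0::real)))" for i
    by (rule linear_independent_extend[OF indC])
  hence "\<forall>i. \<exists>g. linear g \<and> (\<forall>x\<in>C. g x = (if x = h i then 1 else (0::real)))" by blast
  then obtain g :: "nat \<Rightarrow> real^'m \<Rightarrow> real" where g0: "\<forall>i. linear (g i) \<and> (\<forall>x\<in>C. g i x = (if x = h i then 1 else 0))"
    by (rule choice[THEN exE]) blast
  hence g: "\<And>i. linear (g i)"
    "\<And>i x. x \<in> C \<Longrightarrow> g i x = (if x = h i then 1 else 0)" by auto
  define V where "V i = (\<Sum>b\<in>Basis. g i b *\<^sub>R b)" for i
  have Vg: "V i \<bullet> y = g i y" for i y
  proof -
    have "g i y = g i (\<Sum>b\<in>Basis. (y \<bullet> b) *\<^sub>R b)" by (simp add: euclidean_representation)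
    also have "\<dots> = (\<Sum>b\<in>Basis. g i ((y \<bullet> b) *\<^sub>R b))"
      using linear_sum[OF g(1)] by (simp add: o_def)
    also have "\<dots> = (\<Sum>b\<in>Basis. (y \<bullet> b) * g i b)"
      by (rule sum.cong) (simp_all add: linear_scale[OF g(1)])
    also have "\<dots> = (\<Sum>b\<in>Basis. g i b * (b \<bullet> y))"
      by (rule sum.cong) (simp_all add: inner_commute)
    also have "\<dots> = V i \<bullet> y" by (simp add: V_def inner_sum_left)
    finally show ?thesis by simp
  qed
  have AV: "(A *v V i) $ R l = (if i = l then 1 else 0)" if "i \<le> k" "l \<le> k" for i l
  proof -
    have "(A *v V i) $ R l = A $ R l \<bullet> V i" by (simp add: matrix_vector_mul_component)
    also have "\<dots> = g i (h l)" using R[OF that(2)] Vg[of i "A $ R l"] inner_commute[of "A $ R l" "V i"] by metis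
    also have "\<dots> = (if h l = h i then 1 else 0)" using g(2) h that(2) bij_betwE by blast
    also have "(h l = h i) = (l = i)" using h that unfolding bij_betw_def inj_on_def by auto
    finally show ?thesis by auto
  qed
  define N where "N = Matrix.mat (Suc k) (Suc k) (\<lambda>(i,l). (B *v V i) $ R l)"
  define NA where "NA = Matrix.mat (Suc k) (Suc k) (\<lambda>(i,l). (A *v V i) $ R l)"
  have NA1: "NA = 1\<^sub>m (Suc k)" by (rule eq_matI) (auto simp: NA_def AV)
  have Ncar: "N \<in> carrier_mat (Suc k) (Suc k)" by (simp add: N_def)
  have NAcar: "NA \<in> carrier_mat (Suc k) (Suc k)" by (simp add: NA_def)
  have cof: "cofactor N i j = cofactor NA i j" if "i < Suc k" "j < Suc k" for i j
  proof -
    define w where "w a = V (if a < i then a else Suc a)" for a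
    define \<rho> where "\<rho> b = R (if b < j then b else Suc b)" for b
    have "mat_delete N i j = Matrix.mat k k (\<lambda>(a,b). (B *v w a) $ \<rho> b)"
      by (rule eq_matI) (auto simp: mat_delete_def N_def w_def \<rho>_def)
    moreover have "mat_delete NA i j = Matrix.mat k k (\<lambda>(a,b). (A *v w a) $ \<rho> b)"
      by (rule eq_matI) (auto simp: mat_delete_def NA_def w_def \<rho>_def)
    ultimately show ?thesis using key[of w \<rho>] by (simp add: cofactor_def)
  qed
  have adjeq: "adj_mat N = adj_mat NA"
    by (rule eq_matI) (use cof Ncar NAcar in \<open>auto simp: adj_mat_def\<close>)
  have adj1: "adj_mat NA = 1\<^sub>m (Suc k)"
  proof -
    have o: "(1::real) \<cdot>\<^sub>m 1\<^sub>m (Suc k) = 1\<^sub>m (Suc k)" by (rule eq_matI) auto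
    have "NA * adj_mat NA = 1\<^sub>m (Suc k)" using adj_mat(2)[OF NAcar] NA1 o by simp
    moreover have "NA * adj_mat NA = adj_mat NA" using NA1 adj_mat(1)[OF NAcar] by simp
    ultimately show ?thesis by simp
  qed
  define c where "c = Determinant.det N"
  have "N * adj_mat N = c \<cdot>\<^sub>m 1\<^sub>m (Suc k)" using adj_mat(2)[OF Ncar] c_def by simp
  hence Nc: "N = c \<cdot>\<^sub>m 1\<^sub>m (Suc k)" using adjeq adj1 Ncar by simp
  have BV: "(B *v V i) $ R l = (if i = l then c else 0)" if "i \<le> k" "l \<le> k" for i l
  proof -
    have "(B *v V i) $ R l = N $$ (i,l)" using that by (simp add: N_def)
    also have "\<dots> = (if i = l then c else 0)" using that by (simp add: Nc)
    finally show ?thesis .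
  qed
  have ck: "c ^ k = 1"
  proof -
    have "Matrix.mat k k (\<lambda>(i,l). (B *v V i) $ R l) = c \<cdot>\<^sub>m 1\<^sub>m k"
      by (rule eq_matI) (auto simp: BV)
    moreover have "Matrix.mat k k (\<lambda>(i,l). (A *v V i) $ R l) = 1\<^sub>m k"
      by (rule eq_matI) (auto simp: AV)
    ultimately show ?thesis using key[of V R] by simp
  qed
  have c01: "c = 1 \<or> c = -1" using c_pm[OF ck k1] .
  have ckm: "c * c^(k-1) = 1"
  proof -
    obtain m where m: "k = Suc m" using k1 by (cases k) auto
    show ?thesis using ck by (simp add: m)
  qed
  have core: "(B *v x) $ r = c * (A *v x) $ r"
    if \<sigma>1: "\<And>t. t < k-1 \<Longrightarrow> \<sigma> t \<le> k"
    and \<sigma>2: "\<And>t t'. t<k-1 \<Longrightarrow> t'<k-1 \<Longrightarrow> \<sigma> t = \<sigma> t' \<Longrightarrow> t = t'"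
    and tri: "(\<forall>t<k-1. (A *v x) $ R (\<sigma> t) = 0 \<and> (B *v x) $ R (\<sigma> t) = 0)
       \<or> (\<forall>t<k-1. (A *v V (\<sigma> t)) $ r = 0 \<and> (B *v V (\<sigma> t)) $ r = 0)"
    for x r \<sigma>
  proof -
    define w where "w t = (if t < k-1 then V (\<sigma> t) else x)" for t
    define \<rho> where "\<rho> t = (if t < k-1 then R (\<sigma> t) else r)" for t
    define fA where "fA i l = (A *v w i) $ \<rho> l" for i l
    define fB where "fB i l = (B *v w i) $ \<rho> l" for i l
    have sig: "(\<sigma> i = \<sigma> l) = (i = l)" if "i<k-1" "l<k-1" for i l
      using \<sigma>2[OF that] by auto
    have DA: "fA i l = (if i = l then 1 else 0)" if "i<k-1" "l<k-1" for i l
      using that AV[OF \<sigma>1[OF that(1)] \<sigma>1[OF that(2)]] sig[OF that]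
      by (simp add: fA_def w_def \<rho>_def)
    have DB: "fB i l = (if i = l then c else 0)" if "i<k-1" "l<k-1" for i l
      using that BV[OF \<sigma>1[OF that(1)] \<sigma>1[OF that(2)]] sig[OF that]
      by (simp add: fB_def w_def \<rho>_def)
    have lA: "fA (k-1) (k-1) = (A *v x) $ r" by (simp add: fA_def w_def \<rho>_def)
    have lB: "fB (k-1) (k-1) = (B *v x) $ r" by (simp add: fB_def w_def \<rho>_def)
    have dets: "Determinant.det (Matrix.mat k k (\<lambda>(i,l). fA i l)) = 1^(k-1) * (A *v x) $ r
       \<and> Determinant.det (Matrix.mat k k (\<lambda>(i,l). fB i l)) = c^(k-1) * (B *v x) $ r"
      using tri
    proof
      assume T: "\<forall>t<k-1. (A *v x) $ R (\<sigma> t) = 0 \<and> (B *v x) $ R (\<sigma> t) = 0"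
      have ZA: "fA (k-1) l = 0" if "l < k-1" for l using T that by (simp add: fA_def w_def \<rho>_def)
      have ZB: "fB (k-1) l = 0" if "l < k-1" for l using T that by (simp add: fB_def w_def \<rho>_def)
      show ?thesis using det_ut[of k fA 1, OF k1 DA ZA] det_ut[of k fB c, OF k1 DB ZB] lA lB by simp
    next
      assume T: "\<forall>t<k-1. (A *v V (\<sigma> t)) $ r = 0 \<and> (B *v V (\<sigma> t)) $ r = 0"
      have ZA: "fA i (k-1) = 0" if "i < k-1" for i using T that by (simp add: fA_def w_def \<rho>_def)
      have ZB: "fB i (k-1) = 0" if "i < k-1" for i using T that by (simp add: fB_def w_def \<rho>_def)
      show ?thesis using det_lt[of k fA 1, OF k1 DA ZA] det_lt[of k fB c, OF k1 DB ZB] lA lB by simp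
    qed
    have H: "c^(k-1) * (B *v x) $ r = (A *v x) $ r"
      using key[of w \<rho>] dets unfolding fA_def fB_def by simp
    have "c * (A *v x) $ r = (c * c^(k-1)) * (B *v x) $ r"
      by (simp only: H[symmetric] mult.assoc)
    hence "c * (A *v x) $ r = (B *v x) $ r" by (simp only: ckm mult_1_left)
    thus ?thesis by (rule sym)
  qed
  define ins where "ins a t = (if t < a then t else Suc t)" for a t :: nat
  have ins1: "ins a t \<le> k" if "t < k - 1" "a \<le> k" for a t using that by (auto simp: ins_def)
  have ins2: "t = t'" if "ins a t = ins a t'" for a t t' using that by (auto simp: ins_def split: if_splits)
  have ins3: "ins a t \<noteq> a" for a t by (auto simp: ins_def)
  have rowR: "(B *v x) $ R a = c * (A *v x) $ R a" if "a \<le> k" for x a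
  proof (rule core[of "ins a"])
    show "ins a t \<le> k" if "t < k-1" for t using ins1 that \<open>a \<le> k\<close> .
    show "t = t'" if "ins a t = ins a t'" for t t' using ins2 that .
    show "(\<forall>t<k-1. (A *v x) $ R (ins a t) = 0 \<and> (B *v x) $ R (ins a t) = 0)
       \<or> (\<forall>t<k-1. (A *v V (ins a t)) $ R a = 0 \<and> (B *v V (ins a t)) $ R a = 0)"
      using AV BV ins1 ins3 \<open>a \<le> k\<close> by auto
  qed
  have colV: "(B *v V s) $ r = c * (A *v V s) $ r" if "s \<le> k" for s r
  proof (rule core[of "ins s"])
    show "ins s t \<le> k" if "t < k-1" for t using ins1 that \<open>s \<le> k\<close> .
    show "t = t'" if "ins s t = ins s t'" for t t' using ins2 that .
    show "(\<forall>t<k-1. (A *v V s) $ R (ins s t) = 0 \<and> (B *v V s) $ R (ins s t) = 0)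
       \<or> (\<forall>t<k-1. (A *v V (ins s t)) $ r = 0 \<and> (B *v V (ins s t)) $ r = 0)"
      using AV BV ins1 ins3 \<open>s \<le> k\<close> by (metis (no_types))
  qed
  have gen: "(B *v x) $ r = c * (A *v x) $ r" for x r
  proof -
    define y where "y = (\<Sum>s<k-1. (A *v x) $ R s *\<^sub>R V s)"
    define x' where "x' = x - y"
    have My: "M *v y = (\<Sum>s<k-1. (A *v x) $ R s *\<^sub>R (M *v V s))" for M :: "real^'m^'n"
      by (simp add: y_def Cartesian_Space.vec.sum matrix_vector_mult_scaleR)
    have Ax': "(A *v x') $ R t = 0" if "t < k-1" for t
    proof -
      have "(A *v y) $ R t = (\<Sum>s<k-1. (A *v x) $ R s * (A *v V s) $ R t)"
        by (simp add: My sum_component)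
      also have "\<dots> = (\<Sum>s<k-1. (if s = t then (A *v x) $ R t else 0))"
        by (rule sum.cong) (use that AV in auto)
      also have "\<dots> = (A *v x) $ R t" using that by simp
      finally show ?thesis by (simp add: x'_def matrix_vector_mult_diff_distrib)
    qed
    have Bx': "(B *v x') $ R t = 0" if "t < k-1" for t
      using rowR[of t x'] Ax'[OF that] that by simp
    have main': "(B *v x') $ r = c * (A *v x') $ r"
    proof (rule core[of "\<lambda>t. t"])
      show "t \<le> k" if "t < k-1" for t using that by simp
    qed (use Ax' Bx' in auto)
    have "(B *v y) $ r = (\<Sum>s<k-1. (A *v x) $ R s * (B *v V s) $ r)"
      by (simp add: My sum_component)
    also have "\<dots> = c * (\<Sum>s<k-1. (A *v x) $ R s * (A *v V s) $ r)"
      by (simp add: sum_distrib_left colV mult.left_commute)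
    also have "(\<Sum>s<k-1. (A *v x) $ R s * (A *v V s) $ r) = (A *v y) $ r"
      by (simp add: My sum_component)
    finally have By: "(B *v y) $ r = c * (A *v y) $ r" .
    have "x = x' + y" by (simp add: x'_def)
    hence "(B *v x) $ r = (B *v x') $ r + (B *v y) $ r" "(A *v x) $ r = (A *v x') $ r + (A *v y) $ r"
      by (metis matrix_vector_right_distrib vector_add_component)+
    thus ?thesis using main' By by (simp add: algebra_simps)
  qed
  have Bc: "B = c *\<^sub>R A"
  proof -
    have "B $ r $ j = c * A $ r $ j" for r j
      using gen[of "axis j 1" r] by (simp add: matrix_vector_mult_basis column_def)
    thus ?thesis by (simp add: Finite_Cartesian_Product.vec_eq_iff)
  qed
  show ?thesis
  proof (cases "c = 1")
    case True thus ?thesis using Bc by simp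
  next
    case False
    hence c: "c = -1" using c01 by simp
    hence "A = - B" using Bc by (simp add: Finite_Cartesian_Product.vec_eq_iff)
    moreover have "even k" using ck c by (metis neg_one_odd_power one_neq_neg_one)
    ultimately show ?thesis by simp
  qed
qed

end
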